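(* Let $H$ be a finite group, $N$ a normal subgroup of $H$, and let $M_1, \dots, M_k$ be maximal subgroups of $H$ in general position. Then the $M_i$ can be reindexed and an integer $l$ with $0 \le l \le k$ chosen so that $\{M_1 \cap N, \dots, M_l \cap N\}$ is in general position and, for every $j > l$, $M_j \cap N \supseteq \bigcap_{1 \leq i \leq l} (M_i \cap N)$. Moreover, for such an arrangement, if $\pi : H \to H/N$ is the projection and $R = \bigcap_{1 \le i \le l} M_i$, then the subgroups $\pi(R \cap M_j)$, $l < j \le k$, of $H/N$ are in general position.
   Context: All groups are finite. A finite set $\{H_1,\dots,H_n\}$ of subgroups of a group $G$ is in general position if for every $1 \le j \le n$, $\bigcap_{i \neq j} H_i \supsetneq \bigcap_{i} H_i$. *)

theory Defs
  imports "HOL-Algebra.Algebra"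
begin

definition maximal_subgroup :: "'a set \<Rightarrow> ('a, 'b) monoid_scheme \<Rightarrow> bool" where
  "maximal_subgroup M G \<longleftrightarrow> subgroup M G \<and> M \<noteq> carrier G \<and>
     (\<forall>K. subgroup K G \<and> M \<subseteq> K \<longrightarrow> K = M \<or> K = carrier G)"

text \<open>General position of the indexed family S i, i in I, of subgroups of a group with
  carrier A (intersections taken inside A, so the empty intersection is A):
  for every j in I, the intersection over I - {j} strictly contains the full intersection.\<close>
definition gen_pos_in :: "'a set \<Rightarrow> 'i set \<Rightarrow> ('i \<Rightarrow> 'a set) \<Rightarrow> bool" where
  "gen_pos_in A I S \<longleftrightarrow>
     (\<forall>j\<in>I. A \<inter> (\<Inter>i\<in>I - {j}. S i) \<supset> A \<inter> (\<Inter>i\<in>I. S i))"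

end

theory Submission
  imports Defs
begin

lemma aux_int: fixes N :: "'a set" and M :: "'c \<Rightarrow> 'a set" and sig :: "'d \<Rightarrow> 'c" and Y :: "'d set" shows "N \<inter> (\<Inter>i\<in>Y. M (sig i) \<inter> N) = N \<inter> (\<Inter>x\<in>sig`Y. M x)"
  by auto

lemma perm_exists:
  fixes S :: "nat set"
  assumes "S \<subseteq> {..<k}"
  shows "\<exists>\<sigma>. bij_betw \<sigma> {..<k} {..<k} \<and> \<sigma> ` {..<card S} = S"
proof -
  have fS: "finite S" using assms finite_subset by blast
  let ?T = "{..<k} - S"
  have cT: "card ?T = k - card S" using assms fS by (simp add: card_Diff_subset)
  obtain f where f: "bij_betw f {..<card S} S"
    using fS by (metis bij_betw_inv ex_bij_betw_finite_nat lessThan_atLeast0)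
  obtain g where g: "bij_betw g {..<card ?T} ?T"
    by (metis bij_betw_inv ex_bij_betw_finite_nat lessThan_atLeast0 finite_Diff finite_lessThan)
  have csk: "card S \<le> k" using assms by (metis card_lessThan card_mono finite_lessThan)
  define \<sigma> where "\<sigma> i = (if i < card S then f i else g (i - card S))" for i
  have b1: "bij_betw \<sigma> {..<card S} S"
    using f by (rule bij_betw_cong[THEN iffD1, rotated]) (simp add: \<sigma>_def)
  have sh: "bij_betw (\<lambda>i. i - card S) {card S..<k} {..<card ?T}"
    unfolding cT
    by (rule bij_betw_byWitness[where f'="\<lambda>i. i + card S"]) auto
  have b2: "bij_betw \<sigma> {card S..<k} ?T"
  proof -
    have "bij_betw (g \<circ> (\<lambda>i. i - card S)) {card S..<k} ?T"
      using bij_betw_trans[OF sh g] .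
    then show ?thesis
      by (rule bij_betw_cong[THEN iffD1, rotated]) (simp add: \<sigma>_def)
  qed
  have "bij_betw \<sigma> ({..<card S} \<union> {card S..<k}) (S \<union> ?T)"
    by (rule bij_betw_combine[OF b1 b2]) blast
  moreover have "{..<card S} \<union> {card S..<k} = {..<k}" using csk by auto
  moreover have "S \<union> ?T = {..<k}" using assms by auto
  ultimately show ?thesis using b1 by (metis bij_betw_imp_surj_on)
qed

theorem lemma2p5:
  fixes H :: "('a, 'b) monoid_scheme" and N :: "'a set"
    and M :: "nat \<Rightarrow> 'a set" and k :: nat
  assumes "group H" and "finite (carrier H)" and "N \<lhd> H"
    and "\<forall>i<k. maximal_subgroup (M i) H"
    and "gen_pos_in (carrier H) {..<k} M"
  shows "(\<exists>\<sigma> l. bij_betw \<sigma> {..<k} {..<k} \<and> l \<le> k \<and>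
            gen_pos_in N {..<l} (\<lambda>i. M (\<sigma> i) \<inter> N) \<and>
            (\<forall>j\<in>{l..<k}. N \<inter> (\<Inter>i<l. M (\<sigma> i) \<inter> N) \<subseteq> M (\<sigma> j) \<inter> N))
       \<and> (\<forall>\<sigma> l. bij_betw \<sigma> {..<k} {..<k} \<and> l \<le> k \<and>
            gen_pos_in N {..<l} (\<lambda>i. M (\<sigma> i) \<inter> N) \<and>
            (\<forall>j\<in>{l..<k}. N \<inter> (\<Inter>i<l. M (\<sigma> i) \<inter> N) \<subseteq> M (\<sigma> j) \<inter> N)
          \<longrightarrow> (let R = carrier H \<inter> (\<Inter>i<l. M (\<sigma> i)) in
               gen_pos_in (carrier (H Mod N)) {l..<k}
                 (\<lambda>j. (\<lambda>h. N #>\<^bsub>H\<^esub> h) ` (R \<inter> M (\<sigma> j)))))"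
proof (rule conjI)
  define P where "P S \<longleftrightarrow> S \<subseteq> {..<k} \<and> N \<inter> (\<Inter>i\<in>S. M i) = N \<inter> (\<Inter>i\<in>{..<k}. M i)" for S
  have "P {..<k}" unfolding P_def by simp
  then obtain S where PS: "P S" and minS: "\<And>S'. P S' \<Longrightarrow> card S \<le> card S'"
    using ex_has_least_nat[of P "{..<k}" card] by blast
  have Sk: "S \<subseteq> {..<k}" using PS P_def by blast
  have fS: "finite S" using Sk finite_subset by blast
  obtain \<sigma> where bs: "bij_betw \<sigma> {..<k} {..<k}" and im: "\<sigma> ` {..<card S} = S"
    using perm_exists[OF Sk] by blast
  define l where "l = card S"
  have lk: "l \<le> k" unfolding l_def using Sk by (metis card_lessThan card_mono finite_lessThan)
  have inj: "inj_on \<sigma> {..<k}" using bs bij_betw_imp_inj_on by blast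
  have gp: "gen_pos_in N {..<l} (\<lambda>i. M (\<sigma> i) \<inter> N)"
    unfolding gen_pos_in_def
  proof
    fix j assume j: "j \<in> {..<l}"
    have e1: "\<sigma> ` ({..<l} - {j}) = S - {\<sigma> j}"
    proof -
      have "{..<l} - {j} \<subseteq> {..<k}" "{j} \<subseteq> {..<k}" using j lk by auto
      from inj_on_image_set_diff[OF inj this] show ?thesis using im l_def by simp
    qed
    have sub: "N \<inter> (\<Inter>i\<in>{..<l} - {j}. M (\<sigma> i) \<inter> N) \<supseteq> N \<inter> (\<Inter>i\<in>{..<l}. M (\<sigma> i) \<inter> N)"
      by auto
    show "N \<inter> (\<Inter>i\<in>{..<l} - {j}. M (\<sigma> i) \<inter> N) \<supset> N \<inter> (\<Inter>i\<in>{..<l}. M (\<sigma> i) \<inter> N)"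
    proof (rule ccontr)
      assume "\<not> ?thesis"
      with sub have eq: "N \<inter> (\<Inter>x\<in>S - {\<sigma> j}. M x) = N \<inter> (\<Inter>x\<in>S. M x)"
        unfolding aux_int e1 using im l_def by auto
      have "P (S - {\<sigma> j})" using PS eq unfolding P_def by auto
      then have "card S \<le> card (S - {\<sigma> j})" by (rule minS)
      moreover have sj: "\<sigma> j \<in> S" using im j l_def by auto
      ultimately show False using card_Diff1_less[OF fS sj] by linarith
    qed
  qed
  have rest: "\<forall>j\<in>{l..<k}. N \<inter> (\<Inter>i<l. M (\<sigma> i) \<inter> N) \<subseteq> M (\<sigma> j) \<inter> N"
  proof
    fix j assume j: "j \<in> {l..<k}"
    have "\<sigma> j < k" using bs j bij_betwE by fastforce
    have "N \<inter> (\<Inter>i<l. M (\<sigma> i) \<inter> N) = N \<inter> (\<Inter>i\<in>{..<k}. M i)"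
      using aux_int[of N M \<sigma> "{..<l}"] im l_def PS P_def by simp
    then show "N \<inter> (\<Inter>i<l. M (\<sigma> i) \<inter> N) \<subseteq> M (\<sigma> j) \<inter> N" using \<open>\<sigma> j < k\<close> by auto
  qed
  show "\<exists>\<sigma> l. bij_betw \<sigma> {..<k} {..<k} \<and> l \<le> k \<and>
            gen_pos_in N {..<l} (\<lambda>i. M (\<sigma> i) \<inter> N) \<and>
            (\<forall>j\<in>{l..<k}. N \<inter> (\<Inter>i<l. M (\<sigma> i) \<inter> N) \<subseteq> M (\<sigma> j) \<inter> N)"
    using bs lk gp rest by blast
next
  interpret G: group H by fact
  have NS: "subgroup N H" using assms(3) by (simp add: normal_imp_subgroup)
  have MS: "\<And>i. i < k \<Longrightarrow> subgroup (M i) H" using assms(4) maximal_subgroup_def by blast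
  show "\<forall>\<sigma> l. bij_betw \<sigma> {..<k} {..<k} \<and> l \<le> k \<and>
            gen_pos_in N {..<l} (\<lambda>i. M (\<sigma> i) \<inter> N) \<and>
            (\<forall>j\<in>{l..<k}. N \<inter> (\<Inter>i<l. M (\<sigma> i) \<inter> N) \<subseteq> M (\<sigma> j) \<inter> N)
          \<longrightarrow> (let R = carrier H \<inter> (\<Inter>i<l. M (\<sigma> i)) in
               gen_pos_in (carrier (H Mod N)) {l..<k}
                 (\<lambda>j. (\<lambda>h. N #>\<^bsub>H\<^esub> h) ` (R \<inter> M (\<sigma> j))))"
  proof (intro allI impI)
    fix \<sigma> l
    assume A: "bij_betw \<sigma> {..<k} {..<k} \<and> l \<le> k \<and>
            gen_pos_in N {..<l} (\<lambda>i. M (\<sigma> i) \<inter> N) \<and>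
            (\<forall>j\<in>{l..<k}. N \<inter> (\<Inter>i<l. M (\<sigma> i) \<inter> N) \<subseteq> M (\<sigma> j) \<inter> N)"
    then have bs: "bij_betw \<sigma> {..<k} {..<k}" and lk: "l \<le> k"
      and rst: "\<forall>j\<in>{l..<k}. N \<inter> (\<Inter>i<l. M (\<sigma> i) \<inter> N) \<subseteq> M (\<sigma> j) \<inter> N" by auto
    have inj: "inj_on \<sigma> {..<k}" using bs bij_betw_imp_inj_on by blast
    have sk: "\<And>i. i < k \<Longrightarrow> \<sigma> i < k" using bs bij_betwE by fastforce
    define R where "R = carrier H \<inter> (\<Inter>i<l. M (\<sigma> i))"
    define C where "C = carrier (H Mod N)"
    define F where "F = (\<lambda>j. (\<lambda>h. N #>\<^bsub>H\<^esub> h) ` (R \<inter> M (\<sigma> j)))"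
    have "gen_pos_in C {l..<k} F"
      unfolding gen_pos_in_def
    proof
      fix j0 assume j0: "j0 \<in> {l..<k}"
      have s0: "\<sigma> j0 < k" using j0 by (intro sk) simp
      have "carrier H \<inter> (\<Inter>i\<in>{..<k} - {\<sigma> j0}. M i) \<supset> carrier H \<inter> (\<Inter>i\<in>{..<k}. M i)"
        by (rule bspec[OF assms(5)[unfolded gen_pos_in_def]]) (simp add: s0)
      then obtain a where a1: "a \<in> carrier H \<inter> (\<Inter>i\<in>{..<k} - {\<sigma> j0}. M i)"
          and a2: "a \<notin> carrier H \<inter> (\<Inter>i\<in>{..<k}. M i)"
        by (meson psubset_imp_ex_mem DiffE)
      have aH: "a \<in> carrier H" using a1 by blast
      have aM: "\<And>i. i < k \<Longrightarrow> i \<noteq> \<sigma> j0 \<Longrightarrow> a \<in> M i" using a1 by blast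
      have an: "a \<notin> M (\<sigma> j0)"
      proof
        assume "a \<in> M (\<sigma> j0)"
        then have "\<And>i. i < k \<Longrightarrow> a \<in> M i" using aM by metis
        then show False using a2 aH by blast
      qed
      have neq: "\<And>i. i < k \<Longrightarrow> i \<noteq> j0 \<Longrightarrow> \<sigma> i \<noteq> \<sigma> j0"
      proof -
        fix i assume "i < k" "i \<noteq> j0"
        moreover have "j0 < k" using j0 by simp
        ultimately show "\<sigma> i \<noteq> \<sigma> j0" using inj unfolding inj_on_def by blast
      qed
      have aR: "a \<in> R"
      proof -
        have "\<And>i. i < l \<Longrightarrow> a \<in> M (\<sigma> i)"
        proof -
          fix i assume il: "i < l"
          have ik: "i < k" using il lk by simp
          have "i \<noteq> j0" using il j0 by simp
          then show "a \<in> M (\<sigma> i)" using aM[OF sk[OF ik]] neq[OF ik] by blast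
        qed
        then show ?thesis unfolding R_def using aH by blast
      qed
      have inC: "N #>\<^bsub>H\<^esub> a \<in> C" unfolding C_def FactGroup_def RCOSETS_def using aH by auto
      have inF: "\<And>j. j \<in> {l..<k} - {j0} \<Longrightarrow> N #>\<^bsub>H\<^esub> a \<in> F j"
      proof -
        fix j assume j: "j \<in> {l..<k} - {j0}"
        then have jk: "j < k" and jj: "j \<noteq> j0" by auto
        have "a \<in> M (\<sigma> j)" using aM[OF sk[OF jk]] neq[OF jk jj] by blast
        then have "a \<in> R \<inter> M (\<sigma> j)" using aR by blast
        then show "N #>\<^bsub>H\<^esub> a \<in> F j" unfolding F_def by (rule imageI)
      qed
      have notF: "N #>\<^bsub>H\<^esub> a \<notin> F j0"
      proof
        assume "N #>\<^bsub>H\<^esub> a \<in> F j0"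
        then obtain b where bR: "b \<in> R" and bM: "b \<in> M (\<sigma> j0)"
          and eq: "N #>\<^bsub>H\<^esub> a = N #>\<^bsub>H\<^esub> b" unfolding F_def by auto
        have bH: "b \<in> carrier H" using bR R_def by auto
        have "a \<in> N #>\<^bsub>H\<^esub> b" using G.rcos_self[OF aH NS] unfolding eq .
        then obtain n where nN: "n \<in> N" and an': "a = n \<otimes>\<^bsub>H\<^esub> b"
          unfolding r_coset_def by blast
        have nH: "n \<in> carrier H" using subgroup.mem_carrier[OF NS nN] .
        have nE: "n = a \<otimes>\<^bsub>H\<^esub> inv\<^bsub>H\<^esub> b" using an' nH bH
          by (simp add: G.m_assoc)
        have "\<And>i. i < l \<Longrightarrow> n \<in> M (\<sigma> i)"
        proof -
          fix i assume il: "i < l"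
          have sg: "subgroup (M (\<sigma> i)) H" using MS sk il lk by auto
          have "a \<in> M (\<sigma> i)" "b \<in> M (\<sigma> i)" using aR bR il unfolding R_def by auto
          then show "n \<in> M (\<sigma> i)" unfolding nE using sg
            by (simp add: subgroup.m_closed subgroup.m_inv_closed)
        qed
        then have "n \<in> N \<inter> (\<Inter>i<l. M (\<sigma> i) \<inter> N)" using nN by auto
        then have "n \<in> M (\<sigma> j0)" using rst j0 by blast
        then have "a \<in> M (\<sigma> j0)" unfolding an' using bM MS s0
          by (simp add: subgroup.m_closed)
        then show False using an by simp
      qed
      show "C \<inter> (\<Inter>j\<in>{l..<k} - {j0}. F j) \<supset> C \<inter> (\<Inter>j\<in>{l..<k}. F j)"
      proof (rule psubsetI)
        show "C \<inter> (\<Inter>j\<in>{l..<k}. F j) \<subseteq> C \<inter> (\<Inter>j\<in>{l..<k} - {j0}. F j)" by blast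
        have "N #>\<^bsub>H\<^esub> a \<in> C \<inter> (\<Inter>j\<in>{l..<k} - {j0}. F j)" using inC inF by blast
        moreover have "N #>\<^bsub>H\<^esub> a \<notin> C \<inter> (\<Inter>j\<in>{l..<k}. F j)" using notF j0 by blast
        ultimately show "C \<inter> (\<Inter>j\<in>{l..<k}. F j) \<noteq> C \<inter> (\<Inter>j\<in>{l..<k} - {j0}. F j)" by blast
      qed
    qed
    then show "let R = carrier H \<inter> (\<Inter>i<l. M (\<sigma> i)) in
               gen_pos_in (carrier (H Mod N)) {l..<k}
                 (\<lambda>j. (\<lambda>h. N #>\<^bsub>H\<^esub> h) ` (R \<inter> M (\<sigma> j)))"
      unfolding R_def C_def F_def Let_def .
  qed
qed

end
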